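(* Let $\Sigma$ be a signed graph whose underlying graph is cubic and has girth at least $4$. Then $l(\Sigma) \leq \frac{3}{8}|V(\Sigma)|$.
   Context: A signed graph $\Sigma = (G,\sigma)$ consists of a finite graph $G$ and a sign function $\sigma: E(G) \to \{+1,-1\}$. A circle is a connected nonempty $2$-regular subgraph (loops count as circles of length $1$ and pairs of parallel edges as circles of length $2$, so girth at least $4$ means $G$ has no loops, no multiple edges and no triangles). A circle is positive if the product of the signs of its edges is $+1$ and negative otherwise; $\Sigma$ is balanced if all its circles are positive. The frustration index $l(\Sigma)$ is the smallest number of edges whose deletion from $\Sigma$ leaves a balanced signed graph. Cubic means every vertex has degree exactly $3$. *)

theory Defs
  imports Complex_Main
begin

text \<open>A finite simple graph: vertex set V, edges are 2-element subsets of V.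
  (Girth at least 4 excludes loops and parallel edges, so simple graphs suffice.)
  A signed graph additionally has a sign function sigma on edges with values +1/-1.\<close>

definition simple_graph :: "'a set \<Rightarrow> 'a set set \<Rightarrow> bool" where
  "simple_graph V E \<longleftrightarrow> finite V \<and>
     (\<forall>e\<in>E. \<exists>u v. u \<noteq> v \<and> u \<in> V \<and> v \<in> V \<and> e = {u, v})"

definition signed_graph :: "'a set \<Rightarrow> 'a set set \<Rightarrow> ('a set \<Rightarrow> int) \<Rightarrow> bool" where
  "signed_graph V E \<sigma> \<longleftrightarrow> simple_graph V E \<and> (\<forall>e\<in>E. \<sigma> e = 1 \<or> \<sigma> e = -1)"

definition degree :: "'a set set \<Rightarrow> 'a \<Rightarrow> nat" where
  "degree E v = card {e\<in>E. v \<in> e}"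

definition cubic :: "'a set \<Rightarrow> 'a set set \<Rightarrow> bool" where
  "cubic V E \<longleftrightarrow> (\<forall>v\<in>V. degree E v = 3)"

definition is_circle :: "'a set set \<Rightarrow> 'a set set \<Rightarrow> bool" where
  "is_circle E C \<longleftrightarrow> C \<noteq> {} \<and> finite C \<and> C \<subseteq> E \<and>
     (\<forall>v\<in>\<Union>C. degree C v = 2) \<and>
     (\<forall>u\<in>\<Union>C. \<forall>v\<in>\<Union>C. (\<lambda>x y. {x, y} \<in> C)\<^sup>*\<^sup>* u v)"

definition girth_at_least :: "'a set set \<Rightarrow> nat \<Rightarrow> bool" where
  "girth_at_least E k \<longleftrightarrow> (\<forall>C. is_circle E C \<longrightarrow> card C \<ge> k)"

definition balanced :: "'a set set \<Rightarrow> ('a set \<Rightarrow> int) \<Rightarrow> bool" where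
  "balanced E \<sigma> \<longleftrightarrow> (\<forall>C. is_circle E C \<longrightarrow> (\<Prod>e\<in>C. \<sigma> e) = 1)"

definition frustration_index :: "'a set set \<Rightarrow> ('a set \<Rightarrow> int) \<Rightarrow> nat" where
  "frustration_index E \<sigma> = (LEAST k. \<exists>D. D \<subseteq> E \<and> card D = k \<and> balanced (E - D) \<sigma>)"

end

theory Submission
  imports Defs
begin

definition negs :: "'a set set \<Rightarrow> ('a set \<Rightarrow> int) \<Rightarrow> 'a set \<Rightarrow> 'a set set" where
  "negs E \<sigma> X = {e\<in>E. (\<sigma> e = -1) \<noteq> odd (card (e \<inter> X))}"

lemma odd_card_pair:
  assumes "u \<noteq> v"
  shows "odd (card ({u,v} \<inter> Z)) \<longleftrightarrow> ((u \<in> Z) \<noteq> (v \<in> Z))"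
  using assms by (cases "u \<in> Z"; cases "v \<in> Z") (auto simp: Int_insert_left)

lemma negs_balanced:
  assumes sg: "signed_graph V E \<sigma>"
  shows "balanced (E - negs E \<sigma> X) \<sigma>"
  unfolding balanced_def
proof (intro allI impI)
  fix C assume circ: "is_circle (E - negs E \<sigma> X) C"
  hence CE: "C \<subseteq> E - negs E \<sigma> X" and fC: "finite C" and deg: "\<forall>v\<in>\<Union>C. degree C v = 2"
    by (auto simp: is_circle_def)
  have fe: "\<forall>e\<in>C. finite e" using CE sg by (fastforce simp: signed_graph_def simple_graph_def)
  have fU: "finite (\<Union>C)" using fC fe by blast
  have sig: "\<forall>e\<in>C. \<sigma> e = (-1) ^ card (e \<inter> X)"
  proof
    fix e assume "e \<in> C"
    hence "e \<in> E" "e \<notin> negs E \<sigma> X" using CE by auto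
    hence "\<sigma> e = 1 \<or> \<sigma> e = -1" "(\<sigma> e = -1) = odd (card (e \<inter> X))"
      using sg by (auto simp: signed_graph_def negs_def)
    thus "\<sigma> e = (-1) ^ card (e \<inter> X)" by (cases "even (card (e \<inter> X))") auto
  qed
  have "(\<Prod>e\<in>C. \<sigma> e) = (\<Prod>e\<in>C. (-1::int) ^ card (e \<inter> X))" using sig by simp
  also have "\<dots> = (-1) ^ (\<Sum>e\<in>C. card (e \<inter> X))" by (simp add: power_sum)
  also have "(\<Sum>e\<in>C. card (e \<inter> X)) = (\<Sum>e\<in>C. \<Sum>x\<in>\<Union>C \<inter> X. if x \<in> e then 1 else 0)"
  proof (rule sum.cong)
    fix e assume "e \<in> C"
    then have "e \<inter> X = {x \<in> \<Union>C \<inter> X. x \<in> e}" by auto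
    then show "card (e \<inter> X) = (\<Sum>x\<in>\<Union>C \<inter> X. if x \<in> e then 1 else 0)"
      using fU by (simp add: sum.inter_filter[symmetric])
  qed simp
  also have "\<dots> = (\<Sum>x\<in>\<Union>C \<inter> X. \<Sum>e\<in>C. if x \<in> e then 1 else 0)" by (rule sum.swap)
  also have "\<dots> = (\<Sum>x\<in>\<Union>C \<inter> X. 2)"
  proof (rule sum.cong)
    fix x assume "x \<in> \<Union>C \<inter> X"
    hence "degree C x = 2" using deg by auto
    thus "(\<Sum>e\<in>C. if x \<in> e then 1 else 0) = (2::nat)"
      using fC by (simp add: degree_def sum.inter_filter[symmetric])
  qed simp
  also have "\<dots> = 2 * card (\<Union>C \<inter> X)" by simp
  finally show "(\<Prod>e\<in>C. \<sigma> e) = 1" by (simp add: power_mult)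
qed

lemma fi_le:
  assumes sg: "signed_graph V E \<sigma>"
  shows "frustration_index E \<sigma> \<le> card (negs E \<sigma> X)"
  unfolding frustration_index_def
proof (rule Least_le)
  show "\<exists>D. D \<subseteq> E \<and> card D = card (negs E \<sigma> X) \<and> balanced (E - D) \<sigma>"
    by (rule exI[of _ "negs E \<sigma> X"]) (use negs_balanced[OF sg, of X] in \<open>auto simp: negs_def\<close>)
qed

lemma no_triangle:
  assumes g: "girth_at_least E 4" and "{x,y} \<in> E" "{y,z} \<in> E" "{x,z} \<in> E"
    and "x \<noteq> y" "y \<noteq> z" "x \<noteq> z"
  shows False
proof -
  let ?C = "{{x,y},{y,z},{x,z}}"
  have c3: "card ?C = 3" using assms by (auto simp: doubleton_eq_iff)
  have "is_circle E ?C"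
    unfolding is_circle_def
  proof (intro conjI ballI)
    show "?C \<noteq> {}" by simp
    show "finite ?C" by simp
    show "?C \<subseteq> E" using assms by simp
  next
    fix v assume "v \<in> \<Union>?C"
    hence "v = x \<or> v = y \<or> v = z" by auto
    then show "degree ?C v = 2"
    proof (elim disjE)
      assume "v = x"
      hence "{e \<in> ?C. v \<in> e} = {{x,y},{x,z}}" using assms by auto
      thus ?thesis using assms by (simp add: degree_def doubleton_eq_iff)
    next
      assume "v = y"
      hence "{e \<in> ?C. v \<in> e} = {{x,y},{y,z}}" using assms by auto
      thus ?thesis using assms by (simp add: degree_def doubleton_eq_iff)
    next
      assume "v = z"
      hence "{e \<in> ?C. v \<in> e} = {{y,z},{x,z}}" using assms by auto
      thus ?thesis using assms by (simp add: degree_def doubleton_eq_iff)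
    qed
  next
    fix u w assume uw: "u \<in> \<Union>?C" "w \<in> \<Union>?C"
    show "(\<lambda>a b. {a,b} \<in> ?C)\<^sup>*\<^sup>* u w"
    proof (cases "u = w")
      case True thus ?thesis by simp
    next
      case False
      with uw have "{u,w} \<in> ?C" by (auto simp: insert_commute)
      thus ?thesis by (simp add: r_into_rtranclp)
    qed
  qed
  with g c3 show False by (auto simp: girth_at_least_def)
qed

lemma card_flip_less:
  assumes "finite E" "N \<subseteq> E" "D \<subseteq> E" "card (D - N) < card (D \<inter> N)"
  shows "card ((N - D) \<union> (D - N)) < card N"
proof -
  have f: "finite N" "finite D" using assms finite_subset by auto
  have "card ((N - D) \<union> (D - N)) = card (N - D) + card (D - N)"
    by (rule card_Un_disjoint) (use f in auto)
  moreover have "card (N - D) = card N - card (N \<inter> D)" using f by (simp add: card_Diff_subset_Int)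
  moreover have "card (N \<inter> D) \<le> card N" using f by (simp add: card_mono)
  moreover have "D \<inter> N = N \<inter> D" by blast
  ultimately show ?thesis using assms(4) by simp
qed

lemma negs_flip:
  assumes sg: "signed_graph V E \<sigma>"
  shows "negs E \<sigma> ((X - Y) \<union> (Y - X)) =
    (negs E \<sigma> X - {e\<in>E. odd (card (e \<inter> Y))}) \<union> ({e\<in>E. odd (card (e \<inter> Y))} - negs E \<sigma> X)"
proof -
  have *: "odd (card (e \<inter> ((X - Y) \<union> (Y - X)))) = (odd (card (e \<inter> X)) \<noteq> odd (card (e \<inter> Y)))"
    if "e \<in> E" for e
  proof -
    obtain u v where "u \<noteq> v" "e = {u,v}" using sg \<open>e \<in> E\<close>
      by (auto simp: signed_graph_def simple_graph_def)
    then show ?thesis by (simp add: odd_card_pair) blast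
  qed
  show ?thesis unfolding negs_def using * by auto
qed

theorem theorem3:
  fixes V :: "'a set" and E :: "'a set set" and \<sigma> :: "'a set \<Rightarrow> int"
  assumes "signed_graph V E \<sigma>"
    and "cubic V E"
    and "girth_at_least E 4"
  shows "real (frustration_index E \<sigma>) \<le> 3 / 8 * real (card V)"
proof -
  note sg = assms(1)
  have fV: "finite V" and Eform: "\<forall>e\<in>E. \<exists>u v. u \<noteq> v \<and> u \<in> V \<and> v \<in> V \<and> e = {u,v}"
    using sg by (auto simp: signed_graph_def simple_graph_def)
  have "E \<subseteq> Pow V" using Eform by auto
  hence fE: "finite E" using fV by (meson finite_Pow_iff finite_subset)
  have EV: "x \<in> V" if h: "e \<in> E" "x \<in> e" for e x
  proof -
    obtain u v where "u \<in> V" "v \<in> V" "e = {u,v}" using Eform h(1) by meson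
    thus ?thesis using h(2) by auto
  qed
  have Eobt: "\<exists>y. y \<noteq> x \<and> e = {x,y}" if h: "e \<in> E" "x \<in> e" for e x
  proof -
    obtain u v where "u \<noteq> v" "e = {u,v}" using Eform h(1) by meson
    thus ?thesis using h(2) by (auto simp: insert_commute)
  qed
  obtain X0 where minX: "\<forall>X. card (negs E \<sigma> X0) \<le> card (negs E \<sigma> X)"
    using ex_has_least_nat[of "\<lambda>_. True" undefined "\<lambda>X. card (negs E \<sigma> X)"] by auto
  define N where "N = negs E \<sigma> X0"
  have NE: "N \<subseteq> E" unfolding N_def negs_def by auto
  have fN: "finite N" using NE fE finite_subset by auto
  have nobetter: "\<not> card ({e\<in>E. odd (card (e \<inter> Y))} - N) < card ({e\<in>E. odd (card (e \<inter> Y))} \<inter> N)"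
    for Y
  proof
    assume lt: "card ({e\<in>E. odd (card (e \<inter> Y))} - N) < card ({e\<in>E. odd (card (e \<inter> Y))} \<inter> N)"
    have "card (negs E \<sigma> ((X0 - Y) \<union> (Y - X0))) < card N"
      using negs_flip[OF sg, of X0 Y] card_flip_less[OF fE NE _ lt] N_def by auto
    with minX N_def show False by (metis leD)
  qed
  have deg3: "\<And>w. w \<in> V \<Longrightarrow> card {e\<in>E. w\<in>e} = 3" using assms(2) by (simp add: cubic_def degree_def)
  have fEw: "\<And>w. finite {e\<in>E. w\<in>e}" using fE by simp
  have one_neg: "e1 = e2" if "e1 \<in> N" "e2 \<in> N" "w \<in> e1" "w \<in> e2" for w e1 e2
  proof (rule ccontr)
    assume ne: "e1 \<noteq> e2"
    have wV: "w \<in> V" using that NE EV by blast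
    have dY: "{e\<in>E. odd (card (e \<inter> {w}))} = {e\<in>E. w\<in>e}" by (auto simp: Int_insert_right)
    have "{e1,e2} \<subseteq> {e\<in>E. w\<in>e} \<inter> N" using that NE by auto
    hence c2: "2 \<le> card ({e\<in>E. w\<in>e} \<inter> N)" using ne fEw[of w]
      by (metis (no_types, lifting) card_2_iff card_mono finite_Int)
    have "card ({e\<in>E. w\<in>e} - N) = card {e\<in>E. w\<in>e} - card ({e\<in>E. w\<in>e} \<inter> N)"
      using fEw[of w] by (simp add: card_Diff_subset_Int)
    hence "card ({e\<in>E. w\<in>e} - N) < card ({e\<in>E. w\<in>e} \<inter> N)" using c2 deg3[OF wV] by simp
    with nobetter[of "{w}"] dY show False by simp
  qed
  have tri: False if "{x,y} \<in> E" "{y,z} \<in> E" "{x,z} \<in> E" "x \<noteq> y" "y \<noteq> z" "x \<noteq> z" for x y z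
    using no_triangle[OF assms(3) that] .
  have key: False if uv: "{u,v} \<in> N" and ua: "{u,a} \<in> E" and ub: "{u,b} \<in> E"
    and d: "a \<noteq> b" "a \<noteq> v" "b \<noteq> v" "u \<noteq> a" "u \<noteq> b"
    and ea: "ea \<in> N" "a \<in> ea" and eb: "eb \<in> N" "b \<in> eb" for u v a b ea eb
  proof -
    have "u \<noteq> v" using uv NE Eobt by fastforce
    obtain a' where a': "a' \<noteq> a" "ea = {a,a'}" using Eobt ea NE by blast
    obtain b' where b': "b' \<noteq> b" "eb = {b,b'}" using Eobt eb NE by blast
    have a'u: "a' \<noteq> u"
    proof
      assume "a' = u"
      hence "ea = {u,v}" using one_neg[OF ea(1) uv, of u] a' by auto
      thus False using a' d \<open>a' = u\<close> by (auto simp: doubleton_eq_iff)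
    qed
    have b'u: "b' \<noteq> u"
    proof
      assume "b' = u"
      hence "eb = {u,v}" using one_neg[OF eb(1) uv, of u] b' by auto
      thus False using b' d \<open>b' = u\<close> by (auto simp: doubleton_eq_iff)
    qed
    have a'b: "a' \<noteq> b"
    proof
      assume "a' = b"
      hence "{a,b} \<in> E" using a' ea NE by auto
      thus False using tri[of u a b] ua ub d by blast
    qed
    have b'a: "b' \<noteq> a"
    proof
      assume "b' = a"
      hence "{a,b} \<in> E" using b' eb NE by (auto simp: insert_commute)
      thus False using tri[of u a b] ua ub d by blast
    qed
    define Y where "Y = {u,a,b}"
    define D where "D = {e\<in>E. odd (card (e \<inter> Y))}"
    have inD: "{x,y} \<in> D \<longleftrightarrow> (x \<in> Y) \<noteq> (y \<in> Y)" if "{x,y} \<in> E" "x \<noteq> y" for x y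
      using that odd_card_pair[OF that(2), of Y] by (simp add: D_def)
    have "{u,v} \<in> D" using inD[of u v] uv NE \<open>u \<noteq> v\<close> d by (auto simp: Y_def)
    moreover have "ea \<in> D" using inD[of a a'] ea NE a' a'u a'b by (auto simp: Y_def)
    moreover have "eb \<in> D" using inD[of b b'] eb NE b' b'u b'a by (auto simp: Y_def)
    moreover have "{u,v} \<noteq> ea" using a' d \<open>u \<noteq> v\<close> by (auto simp: doubleton_eq_iff)
    moreover have "{u,v} \<noteq> eb" using b' d \<open>u \<noteq> v\<close> by (auto simp: doubleton_eq_iff)
    moreover have "ea \<noteq> eb" using a' b' d a'b by (auto simp: doubleton_eq_iff)
    ultimately have s3: "{{u,v}, ea, eb} \<subseteq> D \<inter> N" and k3: "card {{u,v}, ea, eb} = 3"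
      using uv ea eb by auto
    have c3: "3 \<le> card (D \<inter> N)"
      using card_mono[OF finite_Int[OF disjI2[OF fN]] s3] k3 by simp
    have Eu: "{e\<in>E. u\<in>e} = {{u,v},{u,a},{u,b}}"
    proof (rule card_subset_eq[symmetric])
      show "finite {e\<in>E. u\<in>e}" by (rule fEw)
      show "{{u,v},{u,a},{u,b}} \<subseteq> {e\<in>E. u\<in>e}" using uv NE ua ub by auto
      have "u \<in> V" using ua EV by blast
      thus "card {{u,v},{u,a},{u,b}} = card {e\<in>E. u\<in>e}" using deg3 d \<open>u \<noteq> v\<close>
        by (auto simp: doubleton_eq_iff)
    qed
    have sub: "D - N \<subseteq> ({e\<in>E. a\<in>e} - {{u,a}, ea}) \<union> ({e\<in>E. b\<in>e} - {{u,b}, eb})"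
    proof
      fix e assume e: "e \<in> D - N"
      hence eE: "e \<in> E" and odd: "odd (card (e \<inter> Y))" by (auto simp: D_def)
      hence "e \<inter> Y \<noteq> {}" by (metis card.empty odd_card_imp_not_empty)
      then consider "u \<in> e" | "a \<in> e" | "b \<in> e" by (auto simp: Y_def)
      then show "e \<in> ({e\<in>E. a\<in>e} - {{u,a}, ea}) \<union> ({e\<in>E. b\<in>e} - {{u,b}, eb})"
      proof cases
        case 1
        hence "e = {u,v} \<or> e = {u,a} \<or> e = {u,b}" using Eu eE by blast
        moreover have "\<not> odd (card ({u,a} \<inter> Y))" "\<not> odd (card ({u,b} \<inter> Y))"
          using d by (auto simp: Y_def)
        ultimately show ?thesis using e uv odd by auto
      next
        case 2
        have "u \<notin> e"
        proof
          assume "u \<in> e"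
          hence "e = {u,v} \<or> e = {u,a} \<or> e = {u,b}" using Eu eE by blast
          moreover have "\<not> odd (card ({u,a} \<inter> Y))" "\<not> odd (card ({u,b} \<inter> Y))"
            using d by (auto simp: Y_def)
          ultimately show False using e uv odd by auto
        qed
        thus ?thesis using 2 e eE ea by auto
      next
        case 3
        have "u \<notin> e"
        proof
          assume "u \<in> e"
          hence "e = {u,v} \<or> e = {u,a} \<or> e = {u,b}" using Eu eE by blast
          moreover have "\<not> odd (card ({u,a} \<inter> Y))" "\<not> odd (card ({u,b} \<inter> Y))"
            using d by (auto simp: Y_def)
          ultimately show False using e uv odd by auto
        qed
        thus ?thesis using 3 e eE eb by auto
      qed
    qed
    have aV: "a \<in> V" and bV: "b \<in> V" using ua ub EV by auto
    have "card ({e\<in>E. a\<in>e} - {{u,a}, ea}) = card {e\<in>E. a\<in>e} - card {{u,a}, ea}"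
      using ua ea NE by (intro card_Diff_subset) auto
    also have "\<dots> = 1" using deg3[OF aV] a' a'u d by (auto simp: doubleton_eq_iff)
    finally have ca: "card ({e\<in>E. a\<in>e} - {{u,a}, ea}) = 1" .
    have "card ({e\<in>E. b\<in>e} - {{u,b}, eb}) = card {e\<in>E. b\<in>e} - card {{u,b}, eb}"
      using ub eb NE by (intro card_Diff_subset) auto
    also have "\<dots> = 1" using deg3[OF bV] b' b'u d by (auto simp: doubleton_eq_iff)
    finally have cb: "card ({e\<in>E. b\<in>e} - {{u,b}, eb}) = 1" .
    have "card (D - N) \<le> card (({e\<in>E. a\<in>e} - {{u,a}, ea}) \<union> ({e\<in>E. b\<in>e} - {{u,b}, eb}))"
      by (rule card_mono[OF _ sub]) (use fEw in auto)
    also have "\<dots> \<le> 2" using card_Un_le[of "{e\<in>E. a\<in>e} - {{u,a}, ea}" "{e\<in>E. b\<in>e} - {{u,b}, eb}"] ca cb by linarith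
    finally have "card (D - N) < card (D \<inter> N)" using c3 by simp
    thus False using nobetter[of Y] by (simp add: D_def)
  qed
  define S where "S = \<Union>N"
  define U where "U = V - S"
  have SV: "S \<subseteq> V" using NE EV unfolding S_def by blast
  have fS: "finite S" using SV fV finite_subset by auto
  have cardV: "card V = card S + card U"
    using SV fV fS by (simp add: U_def card_Diff_subset card_mono)
  have c2: "card e = 2" if h: "e \<in> N" for e
  proof -
    obtain u v where "u \<noteq> v" "e = {u,v}" using Eform h NE by (meson subsetD)
    thus ?thesis by simp
  qed
  have cardS: "card S = 2 * card N"
  proof -
    have "card S = sum card N" unfolding S_def
    proof (rule card_Union_disjoint)
      show "pairwise disjnt N" unfolding pairwise_def disjnt_def using one_neg by blast
      show "finite A" if "A \<in> N" for A using c2[OF that] card.infinite by fastforce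
    qed
    also have "\<dots> = sum (\<lambda>_. 2) N" using c2 by (intro sum.cong) auto
    finally show ?thesis by simp
  qed
  have nbr: "\<exists>x. x \<in> U \<and> {w,x} \<in> E" if wS: "w \<in> S" for w
  proof -
    obtain e where e: "e \<in> N" "w \<in> e" using wS S_def by auto
    obtain v where v: "v \<noteq> w" "e = {w,v}" using Eobt[of e w] e NE by auto
    have wV: "w \<in> V" using wS SV by auto
    have "card ({f\<in>E. w\<in>f} - {e}) = 2" using deg3[OF wV] e NE fEw[of w]
      by (subst card_Diff_singleton) auto
    then obtain f1 f2 where f: "f1 \<noteq> f2" "{f\<in>E. w\<in>f} - {e} = {f1,f2}" by (auto simp: card_2_iff)
    have f1: "f1 \<in> E" "w \<in> f1" "f1 \<noteq> e" using f(2) by blast+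
    have f2: "f2 \<in> E" "w \<in> f2" "f2 \<noteq> e" using f(2) by blast+
    obtain x1 where x1: "x1 \<noteq> w" "f1 = {w,x1}" using Eobt f1 by blast
    obtain x2 where x2: "x2 \<noteq> w" "f2 = {w,x2}" using Eobt f2 by blast
    have "x1 \<noteq> x2" using f x1 x2 by auto
    have "x1 \<noteq> v" using f1 x1 v by auto
    have "x2 \<noteq> v" using f2 x2 v by auto
    have x1V: "x1 \<in> V" and x2V: "x2 \<in> V" using EV f1 f2 x1 x2 by auto
    show ?thesis
    proof (rule ccontr)
      assume "\<not> ?thesis"
      then have "x1 \<in> S" "x2 \<in> S" using x1 x2 f1 f2 x1V x2V by (auto simp: U_def)
      then obtain ea eb where "ea \<in> N" "x1 \<in> ea" "eb \<in> N" "x2 \<in> eb" by (auto simp: S_def)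
      then show False using key[of w v x1 x2 ea eb] e v f1 f2 x1 x2
          \<open>x1 \<noteq> x2\<close> \<open>x1 \<noteq> v\<close> \<open>x2 \<noteq> v\<close> by auto
    qed
  qed
  obtain g where g: "\<And>w. w \<in> S \<Longrightarrow> g w \<in> U \<and> {w, g w} \<in> E" using nbr by metis
  have inj: "inj_on (\<lambda>w. {w, g w}) S"
  proof (rule inj_onI)
    fix w w' assume h: "w \<in> S" "w' \<in> S" "{w, g w} = {w', g w'}"
    have "g w \<notin> S" "g w' \<notin> S" using g h(1,2) by (auto simp: U_def)
    thus "w = w'" using h by (auto simp: doubleton_eq_iff)
  qed
  have img: "(\<lambda>w. {w, g w}) ` S \<subseteq> (\<Union>x\<in>U. {e\<in>E. x\<in>e})" using g by auto
  have finB: "finite (\<Union>x\<in>U. {e\<in>E. x\<in>e})" by (rule finite_subset[OF _ fE]) auto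
  have "card S \<le> card (\<Union>x\<in>U. {e\<in>E. x\<in>e})" by (rule card_inj_on_le[OF inj img finB])
  also have "\<dots> \<le> (\<Sum>x\<in>U. card {e\<in>E. x\<in>e})" by (rule card_UN_le) (simp add: U_def fV)
  also have "\<dots> = (\<Sum>x\<in>U. 3)" using deg3 by (intro sum.cong) (auto simp: U_def)
  finally have "card S \<le> 3 * card U" by simp
  hence k: "8 * card N \<le> 3 * card V" using cardS cardV by simp
  have "frustration_index E \<sigma> \<le> card N" using fi_le[OF sg] N_def by simp
  hence "real (frustration_index E \<sigma>) \<le> real (card N)" by simp
  moreover have "8 * real (card N) \<le> 3 * real (card V)" using k
    by (metis of_nat_le_iff of_nat_mult of_nat_numeral)
  ultimately show ?thesis by simp
qed
end
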